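(* Let $n\geq 2$. For $f:[0,1]\to\mathbb{R}$ and $x\in[0,1]$ define $$R_n(f,x)=\sum_{k=0}^{n} f\left(\frac{k}{n}\right)\binom{n}{k}\frac{x^{(k,c(x))}\,(1-x)^{(n-k,c(x))}}{1^{(n,c(x))}},\qquad c(x)=-\frac{\min\{x,1-x\}}{n-1}.$$ If $f:[0,1]\to\mathbb{R}$ is monotone increasing (respectively decreasing), then $R_n(f,\cdot):[0,1]\to\mathbb{R}$ is also monotone increasing (respectively decreasing).
   Context: For real $z$ and $h$, the rising factorial with increment $h$ is $z^{(0,h)}=1$ and $z^{(m,h)}=z(z+h)\cdots(z+(m-1)h)$ for integers $m\geq 1$. Equivalently, $R_n(f,x)=E\,f\left(\frac1n X\right)$, where $X$ is the number of white balls in $n$ draws from a Pólya urn initially containing $x$ white and $1-x$ black balls with replacement parameter $c(x)$. *)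

theory Defs
  imports "HOL-Analysis.Analysis"
begin

definition rising_fact_h :: "real \<Rightarrow> nat \<Rightarrow> real \<Rightarrow> real" where
  "rising_fact_h z m h = (\<Prod>i<m. z + real i * h)"

definition c_par :: "nat \<Rightarrow> real \<Rightarrow> real" where
  "c_par n x = - min x (1 - x) / (real n - 1)"

definition R_op :: "nat \<Rightarrow> (real \<Rightarrow> real) \<Rightarrow> real \<Rightarrow> real" where
  "R_op n f x = (\<Sum>k=0..n. f (real k / real n) * real (n choose k) *
      (rising_fact_h x k (c_par n x) * rising_fact_h (1 - x) (n - k) (c_par n x))
      / rising_fact_h 1 n (c_par n x))"

end

theory Submission
  imports Defs
begin

lemma rf_scale:
  assumes "h \<noteq> 0"
  shows "rising_fact_h z m h = h ^ m * pochhammer (z / h) m"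
proof -
  have "rising_fact_h z m h = (\<Prod>i<m. h * (z / h + real i))"
    unfolding rising_fact_h_def using assms by (intro prod.cong) (auto simp: field_simps)
  also have "\<dots> = h ^ m * pochhammer (z / h) m"
    by (simp add: prod.distrib pochhammer_prod lessThan_atLeast0)
  finally show ?thesis .
qed

lemma rf_vandermonde:
  "(\<Sum>k=0..n. real (n choose k) * (rising_fact_h a k h * rising_fact_h b (n - k) h))
     = rising_fact_h (a + b) n h"
proof (cases "h = 0")
  case True
  have "rising_fact_h z m h = z ^ m" for z m
    unfolding rising_fact_h_def True by simp
  then show ?thesis
    by (simp add: binomial_ring[of a b n] atLeast0AtMost mult_ac)
next
  case False
  have "rising_fact_h (a + b) n h = h ^ n * pochhammer ((a/h) + (b/h)) n"
    using False by (simp add: rf_scale add_divide_distrib)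
  also have "\<dots> = h ^ n * (\<Sum>k\<le>n. of_nat (n choose k) * pochhammer (a/h) k * pochhammer (b/h) (n - k))"
    by (simp add: pochhammer_binomial_sum)
  also have "\<dots> = (\<Sum>k\<le>n. real (n choose k) * (h ^ k * pochhammer (a/h) k * (h ^ (n - k) * pochhammer (b/h) (n - k))))"
    unfolding sum_distrib_left
  proof (intro sum.cong refl)
    fix k assume "k \<in> {..n}"
    then have "h ^ n = h ^ k * h ^ (n - k)" by (simp add: power_add[symmetric])
    then show "h ^ n * (of_nat (n choose k) * pochhammer (a / h) k * pochhammer (b / h) (n - k)) =
         real (n choose k) * (h ^ k * pochhammer (a / h) k * (h ^ (n - k) * pochhammer (b / h) (n - k)))"
      by (simp add: mult_ac)
  qed
  finally show ?thesis using False by (simp add: rf_scale atLeast0AtMost)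
qed

lemma mlr:
  fixes p q g :: "nat \<Rightarrow> real"
  assumes g: "\<And>j k. j \<le> k \<Longrightarrow> k \<le> n \<Longrightarrow> g j \<le> g k"
    and pq: "\<And>j k. j \<le> k \<Longrightarrow> k \<le> n \<Longrightarrow> p k * q j \<le> q k * p j"
    and sp: "sum p {0..n} = 1" and sq: "sum q {0..n} = 1"
  shows "(\<Sum>k=0..n. g k * p k) \<le> (\<Sum>k=0..n. g k * q k)"
proof -
  let ?A = "{0..n}"
  have nonneg: "0 \<le> (\<Sum>j\<in>?A. \<Sum>k\<in>?A. (g k - g j) * (q k * p j - q j * p k))"
  proof (intro sum_nonneg)
    fix j k assume j: "j \<in> ?A" and k: "k \<in> ?A"
    show "0 \<le> (g k - g j) * (q k * p j - q j * p k)"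
    proof (cases "j \<le> k")
      case True
      then show ?thesis using g[OF True] pq[OF True] k by (auto intro!: mult_nonneg_nonneg simp: mult_ac)
    next
      case False
      then have "k \<le> j" by simp
      then show ?thesis using g[OF \<open>k \<le> j\<close>] pq[OF \<open>k \<le> j\<close>] j
        by (auto intro!: mult_nonpos_nonpos simp: mult_ac)
    qed
  qed
  have e: "(g k - g j) * (q k * p j - q j * p k) =
      (g k * q k) * p j - (g k * p k) * q j - (g j * p j) * q k + (g j * q j) * p k" for j k
    by (simp add: algebra_simps)
  have "(\<Sum>j\<in>?A. \<Sum>k\<in>?A. (g k - g j) * (q k * p j - q j * p k)) =
     (\<Sum>j\<in>?A. \<Sum>k\<in>?A. (g k * q k) * p j) - (\<Sum>j\<in>?A. \<Sum>k\<in>?A. (g k * p k) * q j)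
     - (\<Sum>j\<in>?A. \<Sum>k\<in>?A. (g j * p j) * q k) + (\<Sum>j\<in>?A. \<Sum>k\<in>?A. (g j * q j) * p k)"
    unfolding e by (simp add: sum.distrib sum_subtractf)
  also have "\<dots> = 2 * ((\<Sum>k\<in>?A. g k * q k) - (\<Sum>k\<in>?A. g k * p k))"
    by (simp add: sum_distrib_left[symmetric] sum_distrib_right[symmetric] sp sq)
  finally show ?thesis using nonneg by simp
qed


definition wt :: "nat \<Rightarrow> real \<Rightarrow> nat \<Rightarrow> real" where
  "wt n x k = real (n choose k) * (rising_fact_h x k (c_par n x) * rising_fact_h (1 - x) (n - k) (c_par n x))
      / rising_fact_h 1 n (c_par n x)"

lemma R_wt: "R_op n f x = (\<Sum>k=0..n. f (real k / real n) * wt n x k)"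
  unfolding R_op_def wt_def by (simp add: mult.assoc)

lemma c_low: "x \<le> 1/2 \<Longrightarrow> c_par n x = - x / (real n - 1)"
  unfolding c_par_def by (simp add: min_def)

definition Afac :: "nat \<Rightarrow> nat \<Rightarrow> real" where
  "Afac n k = (\<Prod>i<k. 1 - real i / (real n - 1))"

definition phi :: "nat \<Rightarrow> real \<Rightarrow> nat \<Rightarrow> nat \<Rightarrow> real" where
  "phi n x k i = (if i < n - k then 1 - x * (1 + real i / (real n - 1)) else x)"

definition Ff :: "nat \<Rightarrow> real \<Rightarrow> nat \<Rightarrow> real" where
  "Ff n x k = (\<Prod>i<n. phi n x k i)"

lemma num_eq:
  assumes n: "n \<ge> 2" and k: "k \<le> n"
  shows "rising_fact_h x k (- x / (real n - 1)) * rising_fact_h (1 - x) (n - k) (- x / (real n - 1))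
        = Afac n k * Ff n x k"
proof -
  have m: "real n - 1 > 0" using n by simp
  have 1: "rising_fact_h x k (- x / (real n - 1)) = x ^ k * Afac n k"
  proof -
    have "rising_fact_h x k (- x / (real n - 1)) = (\<Prod>i<k. x * (1 - real i / (real n - 1)))"
      unfolding rising_fact_h_def using m by (intro prod.cong) (auto simp: field_simps)
    then show ?thesis by (simp add: prod.distrib Afac_def)
  qed
  have 2: "rising_fact_h (1 - x) (n - k) (- x / (real n - 1)) = (\<Prod>i\<in>{0..<n-k}. phi n x k i)"
    unfolding rising_fact_h_def phi_def using m
    by (intro prod.cong) (auto simp: field_simps lessThan_atLeast0)
  have 3: "(\<Prod>i\<in>{n-k..<n}. phi n x k i) = x ^ k"
  proof -
    have "(\<Prod>i\<in>{n-k..<n}. phi n x k i) = (\<Prod>i\<in>{n-k..<n}. x)"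
      by (intro prod.cong) (auto simp: phi_def)
    then show ?thesis using k by simp
  qed
  have "Ff n x k = (\<Prod>i\<in>{0..<n-k}. phi n x k i) * (\<Prod>i\<in>{n-k..<n}. phi n x k i)"
    unfolding Ff_def lessThan_atLeast0 by (rule prod.atLeastLessThan_concat[symmetric]) auto
  then show ?thesis using 1 2 3 by (simp add: mult_ac)
qed

lemma Ff_cross:
  assumes n: "n \<ge> 2" and xy: "0 \<le> x" "x \<le> y" "y \<le> 1/2" and jk: "j \<le> k" "k \<le> n"
  shows "Ff n x k * Ff n y j \<le> Ff n y k * Ff n x j"
proof -
  have m: "real n - 1 > 0" using n by simp
  have aux: "0 \<le> 1 - z * (1 + real i / (real n - 1))" if "0 \<le> z" "z \<le> 1/2" "i < n" for z i
  proof -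
    have "real i \<le> real n - 1" using that by linarith
    then have "real i / (real n - 1) \<le> 1" using m by simp
    then have "z * (1 + real i / (real n - 1)) \<le> z * 2" using that by (intro mult_left_mono) auto
    then show ?thesis using that by linarith
  qed
  have "Ff n x k * Ff n y j = (\<Prod>i<n. phi n x k i * phi n y j i)"
    unfolding Ff_def by (simp add: prod.distrib)
  also have "\<dots> \<le> (\<Prod>i<n. phi n y k i * phi n x j i)"
  proof (rule prod_mono, intro conjI)
    fix i assume i: "i \<in> {..<n}"
    have ax: "0 \<le> 1 - x * (1 + real i / (real n - 1))" using aux[of x i] xy i by auto
    have ay: "0 \<le> 1 - y * (1 + real i / (real n - 1))" using aux[of y i] xy i by auto
    show "0 \<le> phi n x k i * phi n y j i"
      unfolding phi_def using ax ay xy by auto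
    show "phi n x k i * phi n y j i \<le> phi n y k i * phi n x j i"
    proof (cases "i < n - k")
      case True
      then have "i < n - j" using jk by linarith
      then show ?thesis using True unfolding phi_def by (simp add: mult_ac)
    next
      case False
      note F = False
      show ?thesis
      proof (cases "i < n - j")
        case True
        have "x * (1 - y * (1 + real i / (real n - 1))) \<le> y * (1 - x * (1 + real i / (real n - 1)))"
          using xy by (simp add: algebra_simps)
        then show ?thesis using True F unfolding phi_def by simp
      next
        case False
        then show ?thesis using F unfolding phi_def by (simp add: mult_ac)
      qed
    qed
  qed
  also have "\<dots> = Ff n y k * Ff n x j"
    unfolding Ff_def by (simp add: prod.distrib)
  finally show ?thesis .
qed

lemma den_pos:
  assumes n: "n \<ge> 2" and x: "0 \<le> x" "x \<le> 1/2"
  shows "rising_fact_h 1 n (- x / (real n - 1)) > 0"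
  unfolding rising_fact_h_def
proof (rule prod_pos)
  fix i assume i: "i \<in> {..<n}"
  have m: "real n - 1 > 0" using n by simp
  have "real i \<le> real n - 1" using i by auto
  then have "real i / (real n - 1) \<le> 1" using m by simp
  then have "x * (real i / (real n - 1)) \<le> x * 1" using x by (intro mult_left_mono) auto
  then show "0 < 1 + real i * (- x / (real n - 1))" using x by (simp add: field_simps) 
qed

lemma Afac_nonneg:
  assumes n: "n \<ge> 2" and k: "k \<le> n"
  shows "Afac n k \<ge> 0"
  unfolding Afac_def
proof (rule prod_nonneg)
  fix i assume "i \<in> {..<k}"
  then have "real i \<le> real n - 1" using k by auto
  then show "0 \<le> 1 - real i / (real n - 1)" using n by simp
qed

lemma wt_low:
  assumes n: "n \<ge> 2" and x: "0 \<le> x" "x \<le> 1/2" and k: "k \<le> n"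
  shows "wt n x k = real (n choose k) * Afac n k * Ff n x k / rising_fact_h 1 n (- x / (real n - 1))"
  unfolding wt_def c_low[OF x(2)] num_eq[OF n k] by (simp add: mult_ac)

lemma wt_sum:
  assumes n: "n \<ge> 2" and x: "0 \<le> x" "x \<le> 1/2"
  shows "(\<Sum>k=0..n. wt n x k) = 1"
proof -
  have "(\<Sum>k=0..n. wt n x k) = (\<Sum>k=0..n. real (n choose k) * (rising_fact_h x k (c_par n x) * rising_fact_h (1 - x) (n - k) (c_par n x))) / rising_fact_h 1 n (c_par n x)"
    unfolding wt_def by (simp add: sum_divide_distrib)
  also have "\<dots> = 1"
    unfolding rf_vandermonde using den_pos[OF n x] c_low[OF x(2)] by simp
  finally show ?thesis .
qed

lemma wt_cross:
  assumes n: "n \<ge> 2" and xy: "0 \<le> x" "x \<le> y" "y \<le> 1/2" and jk: "j \<le> k" "k \<le> n"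
  shows "wt n x k * wt n y j \<le> wt n y k * wt n x j"
proof -
  have x2: "x \<le> 1/2" using xy by simp
  have y0: "0 \<le> y" using xy by simp
  define Dx where "Dx = rising_fact_h 1 n (- x / (real n - 1))"
  define Dy where "Dy = rising_fact_h 1 n (- y / (real n - 1))"
  have Dx: "Dx > 0" unfolding Dx_def using den_pos[OF n xy(1) x2] .
  have Dy: "Dy > 0" unfolding Dy_def using den_pos[OF n y0 xy(3)] .
  define K where "K = real (n choose k) * Afac n k * real (n choose j) * Afac n j / (Dx * Dy)"
  have K: "K \<ge> 0" unfolding K_def using Dx Dy Afac_nonneg[OF n jk(2)] Afac_nonneg[OF n, of j] jk
    by (intro divide_nonneg_pos mult_nonneg_nonneg) auto
  have e1: "wt n x k * wt n y j = K * (Ff n x k * Ff n y j)"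
    using wt_low[OF n xy(1) x2 jk(2)] wt_low[OF n y0 xy(3), of j] jk
    unfolding K_def Dx_def[symmetric] Dy_def[symmetric] by (simp add: field_simps)
  have e2: "wt n y k * wt n x j = K * (Ff n y k * Ff n x j)"
    using wt_low[OF n xy(1) x2, of j] wt_low[OF n y0 xy(3) jk(2)] jk
    unfolding K_def Dx_def[symmetric] Dy_def[symmetric] by (simp add: field_simps)
  show ?thesis unfolding e1 e2 using K Ff_cross[OF n xy jk] by (rule mult_left_mono[rotated])
qed

lemma mono_low:
  assumes n: "n \<ge> 2" and f: "mono_on {0..1} f" and xy: "0 \<le> x" "x \<le> y" "y \<le> 1/2"
  shows "R_op n f x \<le> R_op n f y"
  unfolding R_wt
proof (rule mlr)
  fix j k assume jk: "j \<le> k" "k \<le> n"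
  have "real j / real n \<le> real k / real n" using jk by (simp add: divide_right_mono)
  moreover have "real k / real n \<le> 1" using jk n by simp
  ultimately show "f (real j / real n) \<le> f (real k / real n)"
    by (intro monotone_onD[OF f]) auto
  show "wt n x k * wt n y j \<le> wt n y k * wt n x j" by (rule wt_cross[OF n xy jk])
next
  show "sum (wt n x) {0..n} = 1" using wt_sum[OF n, of x] xy by simp
  show "sum (wt n y) {0..n} = 1" using wt_sum[OF n, of y] xy by simp
qed

lemma R_neg: "R_op n (\<lambda>t. - f t) x = - R_op n f x"
  unfolding R_op_def by (simp add: sum_negf)

lemma R_sym:
  assumes n: "n \<ge> 2"
  shows "R_op n f x = R_op n (\<lambda>t. f (1 - t)) (1 - x)"
proof -
  have c: "c_par n (1 - x) = c_par n x" unfolding c_par_def by (simp add: min.commute)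
  have "R_op n (\<lambda>t. f (1 - t)) (1 - x) = (\<Sum>k=0..n. f (1 - real (n - k) / real n) * real (n choose (n - k)) *
      (rising_fact_h (1 - x) (n - k) (c_par n x) * rising_fact_h x (n - (n - k)) (c_par n x))
      / rising_fact_h 1 n (c_par n x))"
    unfolding R_op_def c by (subst sum.atLeastAtMost_rev) simp
  also have "\<dots> = R_op n f x"
    unfolding R_op_def
  proof (intro sum.cong refl)
    fix k assume k: "k \<in> {0..n}"
    then have "1 - real (n - k) / real n = real k / real n" using n
      by (simp add: of_nat_diff field_simps)
    then show "f (1 - real (n - k) / real n) * real (n choose (n - k)) *
      (rising_fact_h (1 - x) (n - k) (c_par n x) * rising_fact_h x (n - (n - k)) (c_par n x))
      / rising_fact_h 1 n (c_par n x) = f (real k / real n) * real (n choose k) *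
      (rising_fact_h x k (c_par n x) * rising_fact_h (1 - x) (n - k) (c_par n x)) / rising_fact_h 1 n (c_par n x)"
      using k by (simp add: binomial_symmetric[symmetric] mult_ac)
  qed
  finally show ?thesis by simp
qed

lemma mono_high:
  assumes n: "n \<ge> 2" and f: "mono_on {0..1} f" and xy: "1/2 \<le> x" "x \<le> y" "y \<le> 1"
  shows "R_op n f x \<le> R_op n f y"
proof -
  let ?g = "\<lambda>t. - f (1 - t)"
  have g: "mono_on {0..1} ?g"
    by (intro monotone_onI) (auto intro!: monotone_onD[OF f])
  have "R_op n ?g (1 - y) \<le> R_op n ?g (1 - x)"
    using xy by (intro mono_low[OF n g]) auto
  then show ?thesis
    unfolding R_neg[of n "\<lambda>t. f (1 - t)"] R_sym[OF n, of f x] R_sym[OF n, of f y] by simp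
qed

lemma mono_all:
  assumes n: "n \<ge> 2" and f: "mono_on {0..1} f"
  shows "mono_on {0..1} (R_op n f)"
proof (rule monotone_onI)
  fix x y :: real assume "x \<in> {0..1}" "y \<in> {0..1}" "x \<le> y"
  then have xy: "0 \<le> x" "x \<le> y" "y \<le> 1" by auto
  show "R_op n f x \<le> R_op n f y"
  proof (cases "y \<le> 1/2")
    case True then show ?thesis using mono_low[OF n f] xy by auto
  next
    case False
    show ?thesis
    proof (cases "1/2 \<le> x")
      case True then show ?thesis using mono_high[OF n f] xy by auto
    next
      case False
      have "R_op n f x \<le> R_op n f (1/2)" using mono_low[OF n f] xy False by auto
      also have "\<dots> \<le> R_op n f y" using mono_high[OF n f] xy \<open>\<not> y \<le> 1/2\<close> by auto
      finally show ?thesis .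
    qed
  qed
qed

theorem theorem3p3:
  fixes n :: nat and f :: "real \<Rightarrow> real"
  assumes "n \<ge> 2"
  shows "(mono_on {0..1} f \<longrightarrow> mono_on {0..1} (R_op n f)) \<and>
         (antimono_on {0..1} f \<longrightarrow> antimono_on {0..1} (R_op n f))"
proof (intro conjI impI)
  assume "mono_on {0..1} f"
  then show "mono_on {0..1} (R_op n f)" by (rule mono_all[OF assms])
next
  assume f: "antimono_on {0..1} f"
  have g: "mono_on {0..1} (\<lambda>t. - f t)"
    by (intro monotone_onI) (auto intro: monotone_onD[OF f])
  have m: "mono_on {0..1} (R_op n (\<lambda>t. - f t))" by (rule mono_all[OF assms g])
  show "antimono_on {0..1} (R_op n f)"
  proof (rule monotone_onI)
    fix x y :: real assume "x \<in> {0..1}" "y \<in> {0..1}" "x \<le> y"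
    then have "R_op n (\<lambda>t. - f t) x \<le> R_op n (\<lambda>t. - f t) y" by (rule monotone_onD[OF m])
    then show "R_op n f y \<le> R_op n f x" unfolding R_neg by simp
  qed
qed

end
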